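(* Let $X,Y\subset\mathbb{C}$ (with the Euclidean metric) and let $f:X\to Y$ be a homeomorphism, where $X$ is of bounded turning. Then $f$ is quasisymmetric if and only if there is a constant $C$ such that for every $x\in X$ and every $r>0$ the set $f(B(x,r))$ is $C$-roundish at $f(x)$.
   Context: $B(x,r)=\{y\in X:|y-x|\le r\}$ is the closed ball in $X$. $X$ is of bounded turning if there is $L>0$ such that any $z_1,z_2\in X$ are joined by a curve $[z_1,z_2]\subset X$ with $\operatorname{diam}[z_1,z_2]\le L|z_1-z_2|$. For $S\subset Y$ and $y\in S$, the inradius is $\operatorname{inr}(S,y)=\inf\{|y-w|:w\in Y\setminus S\}$; $S$ is $C$-roundish at $y$ if $\operatorname{diam}S\le C\operatorname{inr}(S,y)$. A homeomorphism $f$ is quasisymmetric if there is a homeomorphism $\eta:[0,\infty)\to[0,\infty)$ such that for all $t>0$ and $a,b,x\in X$, $|x-a|\le t|x-b|$ implies $|f(x)-f(a)|\le\eta(t)|f(x)-f(b)|$. *)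

theory Defs
  imports "HOL-Analysis.Analysis"
begin

definition cballX :: "complex set \<Rightarrow> complex \<Rightarrow> real \<Rightarrow> complex set" where
  "cballX X x r = {y \<in> X. cmod (y - x) \<le> r}"

definition bounded_turning :: "complex set \<Rightarrow> bool" where
  "bounded_turning X \<longleftrightarrow> (\<exists>L>0. \<forall>z1\<in>X. \<forall>z2\<in>X. \<exists>g. path g \<and> pathstart g = z1 \<and>
      pathfinish g = z2 \<and> path_image g \<subseteq> X \<and> diameter (path_image g) \<le> L * cmod (z1 - z2))"

definition ediam :: "complex set \<Rightarrow> ereal" where
  "ediam S = (SUP p\<in>S \<times> S. ereal (cmod (fst p - snd p)))"

text \<open>Inradius of S \<subseteq> Y at y, relative to the ambient set Y; infinite if Y - S is empty.\<close>
definition inr :: "complex set \<Rightarrow> complex set \<Rightarrow> complex \<Rightarrow> ereal" where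
  "inr Y S y = (INF w\<in>Y - S. ereal (cmod (y - w)))"

definition roundish :: "real \<Rightarrow> complex set \<Rightarrow> complex set \<Rightarrow> complex \<Rightarrow> bool" where
  "roundish C Y S y \<longleftrightarrow> ediam S \<le> ereal C * inr Y S y"

definition quasisymmetric :: "complex set \<Rightarrow> complex set \<Rightarrow> (complex \<Rightarrow> complex) \<Rightarrow> bool" where
  "quasisymmetric X Y f \<longleftrightarrow> (\<exists>g. homeomorphism X Y f g) \<and>
     (\<exists>\<eta> \<eta>'. homeomorphism {0::real..} {0..} \<eta> \<eta>' \<and>
        (\<forall>t>0. \<forall>a\<in>X. \<forall>b\<in>X. \<forall>x\<in>X. cmod (x - a) \<le> t * cmod (x - b) \<longrightarrow>
            cmod (f x - f a) \<le> \<eta> t * cmod (f x - f b)))"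

end

theory Submission
  imports Defs
begin


lemma floor_eq_iff_diff:
  fixes u v :: real assumes "\<lfloor>u\<rfloor> = \<lfloor>v\<rfloor>" shows "\<bar>u - v\<bar> < 1"
proof -
  have "of_int \<lfloor>u\<rfloor> \<le> u" "u < of_int \<lfloor>u\<rfloor> + 1" "of_int \<lfloor>v\<rfloor> \<le> v" "v < of_int \<lfloor>v\<rfloor> + 1"
    by linarith+
  thus ?thesis using assms by linarith
qed

lemma floor_in_range:
  fixes y :: real assumes "\<bar>y\<bar> \<le> of_int m" shows "\<lfloor>y\<rfloor> \<in> {-m..m}"
proof -
  have "\<lfloor>y\<rfloor> \<le> \<lfloor>of_int m :: real\<rfloor>" using assms by (intro floor_mono) simp
  moreover have "\<lfloor>of_int (-m) :: real\<rfloor> \<le> \<lfloor>y\<rfloor>" using assms by (intro floor_mono) simp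
  ultimately show ?thesis by simp
qed

lemma packing:
  fixes S :: "complex set" and c :: complex
  assumes fin: "finite S" and sub: "S \<subseteq> cball c R" and dpos: "\<delta> > 0"
    and sep: "\<forall>z\<in>S. \<forall>w\<in>S. z \<noteq> w \<longrightarrow> \<delta> < cmod (z - w)"
  shows "card S \<le> (2 * nat \<lceil>2*R/\<delta>\<rceil> + 1)^2"
proof -
  define n where "n = nat \<lceil>2*R/\<delta>\<rceil>"
  define e where "e = \<delta>/2"
  have epos: "e > 0" using dpos e_def by simp
  define h where "h z = (\<lfloor>Re (z - c)/e\<rfloor>, \<lfloor>Im (z - c)/e\<rfloor>)" for z
  have inj: "inj_on h S"
  proof (rule inj_onI)
    fix z w assume z: "z \<in> S" and w: "w \<in> S" and hzw: "h z = h w"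
    have "\<bar>Re (z - c)/e - Re (w - c)/e\<bar> < 1"
      using hzw unfolding h_def by (intro floor_eq_iff_diff) simp
    moreover have "Re (z - c)/e - Re (w - c)/e = Re (z - w)/e" by (simp add: diff_divide_distrib[symmetric])
    ultimately have "\<bar>Re (z - w)\<bar>/e < 1" using epos by simp
    hence r: "\<bar>Re (z - w)\<bar> < e" using epos by (simp add: pos_divide_less_eq)
    have "\<bar>Im (z - c)/e - Im (w - c)/e\<bar> < 1"
      using hzw unfolding h_def by (intro floor_eq_iff_diff) simp
    moreover have "Im (z - c)/e - Im (w - c)/e = Im (z - w)/e" by (simp add: diff_divide_distrib[symmetric])
    ultimately have "\<bar>Im (z - w)\<bar>/e < 1" using epos by simp
    hence i: "\<bar>Im (z - w)\<bar> < e" using epos by (simp add: pos_divide_less_eq)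
    have "cmod (z - w) < \<delta>" using cmod_le[of "z-w"] r i e_def by linarith
    thus "z = w" using sep z w by force
  qed
  have img: "h ` S \<subseteq> {-int n..int n} \<times> {-int n..int n}"
  proof
    fix p assume "p \<in> h ` S"
    then obtain z where z: "z \<in> S" and p: "p = h z" by auto
    have "dist c z \<le> R" using sub z by auto
    hence cz: "cmod (z - c) \<le> R" by (simp add: dist_norm norm_minus_commute)
    have nb: "2*R/\<delta> \<le> of_int (int n)" unfolding n_def by linarith
    have "R/e = 2*R/\<delta>" using e_def dpos by (simp add: field_simps)
    have b1: "\<bar>Re (z - c)/e\<bar> \<le> of_int (int n)"
    proof -
      have "\<bar>Re (z - c)/e\<bar> = \<bar>Re (z - c)\<bar>/e" using epos by simp
      also have "\<dots> \<le> R/e" using abs_Re_le_cmod[of "z-c"] cz epos by (simp add: divide_right_mono)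
      finally show ?thesis using nb \<open>R/e = 2*R/\<delta>\<close> by linarith
    qed
    have b2: "\<bar>Im (z - c)/e\<bar> \<le> of_int (int n)"
    proof -
      have "\<bar>Im (z - c)/e\<bar> = \<bar>Im (z - c)\<bar>/e" using epos by simp
      also have "\<dots> \<le> R/e" using abs_Im_le_cmod[of "z-c"] cz epos by (simp add: divide_right_mono)
      finally show ?thesis using nb \<open>R/e = 2*R/\<delta>\<close> by linarith
    qed
    have "\<lfloor>Re (z - c)/e\<rfloor> \<in> {-int n..int n}" using floor_in_range[OF b1] .
    moreover have "\<lfloor>Im (z - c)/e\<rfloor> \<in> {-int n..int n}" using floor_in_range[OF b2] .
    ultimately show "p \<in> {-int n..int n} \<times> {-int n..int n}" using p h_def by simp
  qed
  have "card S \<le> card ({-int n..int n} \<times> {-int n..int n})"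
    using card_inj_on_le[OF inj img] by simp
  also have "\<dots> = (2*n+1)^2"
  proof -
    have "int n - (- int n) + 1 = int (2*n+1)" by simp
    hence "card {-int n..int n} = 2*n+1" by (simp only: card_atLeastAtMost_int nat_int)
    thus ?thesis by (simp add: card_cartesian_product power2_eq_square)
  qed
  finally show ?thesis unfolding n_def .
qed




definition chainp :: "complex \<Rightarrow> complex \<Rightarrow> complex set \<Rightarrow> real \<Rightarrow> complex list \<Rightarrow> bool" where
  "chainp p q P \<delta> ps \<longleftrightarrow> ps \<noteq> [] \<and> hd ps = p \<and> last ps = q \<and> set ps \<subseteq> P \<and>
     (\<forall>i. Suc i < length ps \<longrightarrow> cmod (ps!i - ps!Suc i) \<le> \<delta>)"

lemma chain_shortcut:
  assumes ch: "chainp p q P \<delta> ps" and ij: "i + 2 \<le> j" "j < length ps"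
    and d: "cmod (ps!i - ps!j) \<le> \<delta>"
  shows "chainp p q P \<delta> (take (Suc i) ps @ drop j ps)" and "length (take (Suc i) ps @ drop j ps) < length ps"
proof -
  let ?ps = "take (Suc i) ps @ drop j ps"
  have len: "length ?ps = Suc i + (length ps - j)" using ij by simp
  show "length ?ps < length ps" using len ij by simp
  have ne: "ps \<noteq> []" and hd: "hd ps = p" and la: "last ps = q" and st: "set ps \<subseteq> P"
    and stp: "\<And>k. Suc k < length ps \<Longrightarrow> cmod (ps!k - ps!Suc k) \<le> \<delta>"
    using ch unfolding chainp_def by auto
  have "?ps \<noteq> []" using ij by simp
  moreover have "hd ?ps = p" using hd ne ij by (simp add: hd_append)
  moreover have "last ?ps = q" using la ij by (simp add: last_append last_drop)
  moreover have "set ?ps \<subseteq> P" using st set_take_subset set_drop_subset by fastforce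
  moreover have "\<forall>k. Suc k < length ?ps \<longrightarrow> cmod (?ps!k - ?ps!Suc k) \<le> \<delta>"
  proof (intro allI impI)
    fix k assume k: "Suc k < length ?ps"
    have lt: "Suc i < length ps" using ij by simp
    have lt': "length (take (Suc i) ps) = Suc i" using lt by simp
    consider "Suc k < Suc i" | "k = i" | "k > i" by linarith
    thus "cmod (?ps!k - ?ps!Suc k) \<le> \<delta>"
    proof cases
      case 1
      hence "?ps!k = ps!k" "?ps!Suc k = ps!Suc k" using lt' by (simp_all add: nth_append)
      thus ?thesis using stp[of k] 1 lt by simp
    next
      case 2
      hence "?ps!k = ps!i" "?ps!Suc k = ps!j" using lt' ij by (simp_all add: nth_append)
      thus ?thesis using d by simp
    next
      case 3
      have e1: "?ps!k = ps!(j + (k - Suc i))" using lt' 3 ij by (simp add: nth_append)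
      have e2': "?ps!Suc k = ps!(j + (Suc k - Suc i))" using lt' 3 ij
        by (simp add: nth_append del: diff_Suc_Suc)
      have "j + (Suc k - Suc i) = Suc (j + (k - Suc i))" using 3 by arith
      hence e2: "?ps!Suc k = ps!(Suc (j + (k - Suc i)))" using e2' by simp
      have "Suc (j + (k - Suc i)) < length ps" using k len 3 by simp
      thus ?thesis using stp e1 e2 by simp
    qed
  qed
  ultimately show "chainp p q P \<delta> ?ps" unfolding chainp_def by blast
qed

lemma chain_exists_some:
  assumes g: "path g" and dpos: "\<delta> > 0"
  shows "\<exists>ps. chainp (pathstart g) (pathfinish g) (path_image g) \<delta> ps"
proof -
  have "uniformly_continuous_on {0..1} g"
    using g unfolding path_def by (intro compact_uniformly_continuous) auto
  then obtain e where e: "e > 0" and ue: "\<And>x x'. x \<in> {0..1} \<Longrightarrow> x' \<in> {0..1} \<Longrightarrow> dist x' x < e \<Longrightarrow> dist (g x') (g x) < \<delta>"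
    using dpos unfolding uniformly_continuous_on_def by metis
  obtain n :: nat where n: "1 / real (Suc n) < e" using e by (metis nat_approx_posE)
  define m where "m = Suc n"
  define ps where "ps = map (\<lambda>k. g (real k / real m)) [0..<Suc m]"
  have len: "length ps = Suc m" unfolding ps_def by simp
  have nth: "\<And>k. k < Suc m \<Longrightarrow> ps!k = g (real k / real m)" unfolding ps_def
    by (simp del: upt_Suc)
  have "ps \<noteq> []" using len by auto
  moreover have "hd ps = pathstart g" using nth[of 0] len \<open>ps \<noteq> []\<close> by (simp add: hd_conv_nth pathstart_def)
  moreover have "last ps = pathfinish g" using nth[of m] len m_def \<open>ps \<noteq> []\<close> by (simp add: last_conv_nth pathfinish_def)
  moreover have "set ps \<subseteq> path_image g"
  proof
    fix z assume "z \<in> set ps"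
    then obtain k where k: "k < Suc m" "z = ps!k" using len by (metis in_set_conv_nth)
    have "real k / real m \<in> {0..1}" using k(1) m_def by auto
    thus "z \<in> path_image g" using k nth unfolding path_image_def by auto
  qed
  moreover have "\<forall>i. Suc i < length ps \<longrightarrow> cmod (ps!i - ps!Suc i) \<le> \<delta>"
  proof (intro allI impI)
    fix i assume i: "Suc i < length ps"
    have a: "real i / real m \<in> {0..1}" "real (Suc i) / real m \<in> {0..1}" using i len m_def by auto
    have "dist (real i / real m) (real (Suc i) / real m) = 1 / real m"
      using m_def by (simp add: dist_real_def diff_divide_distrib[symmetric])
    hence "dist (real i / real m) (real (Suc i) / real m) < e" using n m_def by simp
    hence "dist (g (real i / real m)) (g (real (Suc i) / real m)) < \<delta>" using ue a by blast
    thus "cmod (ps!i - ps!Suc i) \<le> \<delta>" using nth i len by (simp add: dist_norm)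
  qed
  ultimately show ?thesis unfolding chainp_def by blast
qed

lemma chain_lemma:
  assumes g: "path g" and sub: "path_image g \<subseteq> cball c R" and dpos: "\<delta> > 0"
  shows "\<exists>ps. chainp (pathstart g) (pathfinish g) (path_image g) \<delta> ps \<and>
      length ps \<le> 2 * (2 * nat \<lceil>2*R/\<delta>\<rceil> + 1)^2 + 1"
proof -
  let ?C = "chainp (pathstart g) (pathfinish g) (path_image g) \<delta>"
  obtain ps0 where "?C ps0" using chain_exists_some[OF g dpos] by blast
  hence "\<exists>m ps. ?C ps \<and> length ps = m" by blast
  define m where "m = (LEAST m. \<exists>ps. ?C ps \<and> length ps = m)"
  obtain ps where ps: "?C ps" "length ps = m"
    using LeastI_ex[OF \<open>\<exists>m ps. ?C ps \<and> length ps = m\<close>] m_def by blast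
  have minimal: "\<And>ps'. ?C ps' \<Longrightarrow> m \<le> length ps'"
    unfolding m_def by (rule Least_le) blast
  have sep: "\<And>i j. i + 2 \<le> j \<Longrightarrow> j < length ps \<Longrightarrow> \<delta> < cmod (ps!i - ps!j)"
  proof (rule ccontr)
    fix i j assume ij: "i + 2 \<le> j" "j < length ps" and "\<not> \<delta> < cmod (ps!i - ps!j)"
    hence d: "cmod (ps!i - ps!j) \<le> \<delta>" by simp
    from chain_shortcut[OF ps(1) ij d] minimal ps(2) show False by fastforce
  qed
  define K where "K = (Suc (length ps)) div 2"
  define E where "E = (\<lambda>k. ps!(2*k)) ` {..<K}"
  have inj: "inj_on (\<lambda>k. ps!(2*k)) {..<K}"
  proof (rule inj_onI)
    fix k k' assume k: "k \<in> {..<K}" "k' \<in> {..<K}" and eq: "ps!(2*k) = ps!(2*k')"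
    show "k = k'"
    proof (rule ccontr)
      assume "k \<noteq> k'"
      hence "2*k + 2 \<le> 2*k' \<or> 2*k' + 2 \<le> 2*k" by linarith
      moreover have "2*k < length ps" "2*k' < length ps" using k K_def by auto
      ultimately have "\<delta> < cmod (ps!(2*k) - ps!(2*k')) \<or> \<delta> < cmod (ps!(2*k') - ps!(2*k))"
        using sep by blast
      thus False using eq dpos by auto
    qed
  qed
  have cardE: "card E = K" unfolding E_def using card_image[OF inj] by simp
  have "E \<subseteq> set ps" unfolding E_def K_def by auto
  moreover have "set ps \<subseteq> path_image g" using ps(1) unfolding chainp_def by blast
  ultimately have Esub: "E \<subseteq> cball c R" using sub by blast
  have Esep: "\<forall>z\<in>E. \<forall>w\<in>E. z \<noteq> w \<longrightarrow> \<delta> < cmod (z - w)"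
  proof (intro ballI impI)
    fix z w assume "z \<in> E" "w \<in> E" "z \<noteq> w"
    then obtain k k' where k: "k < K" "k' < K" "z = ps!(2*k)" "w = ps!(2*k')" unfolding E_def by auto
    hence "k \<noteq> k'" using \<open>z \<noteq> w\<close> by auto
    hence "2*k + 2 \<le> 2*k' \<or> 2*k' + 2 \<le> 2*k" by linarith
    moreover have "2*k < length ps" "2*k' < length ps" using k K_def by auto
    ultimately have "\<delta> < cmod (ps!(2*k) - ps!(2*k')) \<or> \<delta> < cmod (ps!(2*k') - ps!(2*k))"
      using sep by blast
    thus "\<delta> < cmod (z - w)" using k by (auto simp: norm_minus_commute)
  qed
  have "K \<le> (2 * nat \<lceil>2*R/\<delta>\<rceil> + 1)^2"
    using packing[OF _ Esub dpos Esep] cardE E_def by simp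
  hence "length ps \<le> 2 * (2 * nat \<lceil>2*R/\<delta>\<rceil> + 1)^2 + 1" unfolding K_def by linarith
  thus ?thesis using ps by blast
qed




definition swqs :: "complex set \<Rightarrow> (complex \<Rightarrow> complex) \<Rightarrow> real \<Rightarrow> bool" where
  "swqs X f H \<longleftrightarrow> (\<forall>x\<in>X. \<forall>a\<in>X. \<forall>b\<in>X. cmod (x - a) < cmod (x - b) \<longrightarrow>
      cmod (f x - f a) \<le> H * cmod (f x - f b))"

definition ivp :: "complex set \<Rightarrow> bool" where
  "ivp X \<longleftrightarrow> (\<forall>x\<in>X. \<forall>b\<in>X. \<forall>\<rho>. 0 \<le> \<rho> \<and> \<rho> \<le> cmod (x - b) \<longrightarrow> (\<exists>c\<in>X. cmod (x - c) = \<rho>))"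

lemma bt_ivp:
  assumes "bounded_turning X" shows "ivp X"
  unfolding ivp_def
proof (intro ballI allI impI)
  fix x b \<rho> assume x: "x \<in> X" and b: "b \<in> X" and r: "0 \<le> \<rho> \<and> \<rho> \<le> cmod (x - b)"
  obtain L where "\<forall>z1\<in>X. \<forall>z2\<in>X. \<exists>g. path g \<and> pathstart g = z1 \<and>
      pathfinish g = z2 \<and> path_image g \<subseteq> X \<and> diameter (path_image g) \<le> L * cmod (z1 - z2)"
    using assms unfolding bounded_turning_def by blast
  then obtain g where g: "path g" "pathstart g = x" "pathfinish g = b" "path_image g \<subseteq> X"
    using x b by blast
  have cont: "continuous_on {0..1} (\<lambda>s. cmod (x - g s))"
    using g(1) unfolding path_def by (intro continuous_intros) auto
  have "(\<lambda>s. cmod (x - g s)) 0 \<le> \<rho>" "\<rho> \<le> (\<lambda>s. cmod (x - g s)) 1"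
    using g r unfolding pathstart_def pathfinish_def by auto
  then obtain s where s: "0 \<le> s" "s \<le> 1" "cmod (x - g s) = \<rho>"
    using IVT'[of "\<lambda>s. cmod (x - g s)" 0 \<rho> 1] cont by auto
  have "g s \<in> X" using g(4) s unfolding path_image_def by auto
  thus "\<exists>c\<in>X. cmod (x - c) = \<rho>" using s by blast
qed

definition Nd :: "real \<Rightarrow> nat" where
  "Nd H = (2 * nat \<lceil>4 * H^3\<rceil> + 1)^2 + 1"

lemma decay:
  assumes sw: "swqs X f H" and H: "H \<ge> 1" and iv: "ivp X"
    and x: "x \<in> X" and a: "a \<in> X" and b: "b \<in> X"
    and lt: "4^(Nd H) * cmod (x - a) < cmod (x - b)"
  shows "cmod (f x - f a) \<le> 1/2 * cmod (f x - f b)"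
proof (rule ccontr)
  assume neg: "\<not> ?thesis"
  define N where "N = Nd H"
  define d where "d = cmod (x - b)"
  define F where "F = cmod (f x - f b)"
  have "0 \<le> 4^(Nd H) * cmod (x - a)" by simp
  hence dpos: "d > 0" using lt d_def by linarith
  have "cmod (x - a) \<le> 4^(Nd H) * cmod (x - a)" by (simp add: mult_le_cancel_right1)
  hence xab: "cmod (x - a) < cmod (x - b)" using lt by linarith
  have N1: "N \<ge> 1" unfolding N_def Nd_def by simp
  define \<rho> where "\<rho> k = d / (2 * 4^k)" for k :: nat
  have \<rho>pos: "\<And>k. \<rho> k > 0" using dpos \<rho>_def by simp
  have \<rho>le: "\<And>k. \<rho> k < d"
  proof -
    fix k
    have "1 \<le> (4::real)^k" by simp
    hence "d * 1 < d * (2*4^k)" using dpos by (intro mult_strict_left_mono) linarith+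
    thus "\<rho> k < d" unfolding \<rho>_def by (simp add: pos_divide_less_eq mult.commute)
  qed
  have "\<forall>k. \<exists>c. k < N \<longrightarrow> c \<in> X \<and> cmod (x - c) = \<rho> k"
    using iv x b \<rho>pos \<rho>le unfolding ivp_def d_def by (meson less_imp_le)
  then obtain c where c: "\<And>k. k < N \<Longrightarrow> c k \<in> X \<and> cmod (x - c k) = \<rho> k" by metis
  have ax: "\<And>k. k < N \<Longrightarrow> cmod (x - a) < \<rho> k"
  proof -
    fix k assume k: "k < N"
    have "(4::real)^N = 4^(N - Suc k) * 4 * 4^k" using k
      by (metis mult.assoc power_Suc power_add Suc_leI le_add_diff_inverse2 mult.commute)
    also have "\<dots> \<ge> 2 * 4^k"
    proof -
      have "(1::real) \<le> 4^(N - Suc k)" by simp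
      hence "2 \<le> (4::real)^(N - Suc k) * 4" by linarith
      thus ?thesis by (intro mult_right_mono) simp_all
    qed
    finally have "2 * 4^k \<le> (4::real)^N" .
    hence "2 * 4^k * cmod (x - a) \<le> 4^N * cmod (x - a)" by (simp add: mult_right_mono)
    hence "2 * 4^k * cmod (x - a) < d" using lt N_def d_def by simp
    thus "cmod (x - a) < \<rho> k" unfolding \<rho>_def by (simp add: field_simps)
  qed
  have fa: "cmod (f x - f a) \<le> H * F"
    using sw x a b xab unfolding swqs_def F_def by blast
  have Fpos: "F > 0"
  proof (rule ccontr)
    assume "\<not> 0 < F"
    hence "F = 0" using F_def by simp
    hence "cmod (f x - f a) \<le> 0" using fa by simp
    thus False using neg F_def \<open>F = 0\<close> by simp
  qed
  have up: "\<And>k. k < N \<Longrightarrow> cmod (f x - f (c k)) \<le> H * F"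
    using sw x b c \<rho>le unfolding swqs_def F_def d_def by metis
  have lo: "\<And>k. k < N \<Longrightarrow> F / (2*H) < cmod (f x - f (c k))"
  proof -
    fix k assume k: "k < N"
    have "cmod (f x - f a) \<le> H * cmod (f x - f (c k))"
      using sw x a c[OF k] ax[OF k] unfolding swqs_def by metis
    hence "F/2 < H * cmod (f x - f (c k))" using neg F_def by simp
    thus "F / (2*H) < cmod (f x - f (c k))" using H by (simp add: field_simps)
  qed
  define \<delta> where "\<delta> = F / (2 * H^2)"
  have \<delta>pos: "\<delta> > 0" using Fpos H \<delta>_def by simp
  have sep: "\<And>j k. k < j \<Longrightarrow> j < N \<Longrightarrow> \<delta> < cmod (f (c j) - f (c k))"
  proof -
    fix j k assume kj: "k < j" and jN: "j < N"
    have kN: "k < N" using kj jN by simp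
    have "(4::real)^(Suc k) \<le> 4^j" using kj by (intro power_increasing) simp_all
    hence "(4::real)^k * 4 \<le> 4^j" by (simp add: mult.commute)
    hence "2 * (4^k * 4) \<le> (2 * 4^j :: real)" by simp
    hence "d / (2 * 4^j) \<le> d / (2 * (4^k * 4))" using dpos
      by (intro divide_left_mono) simp_all
    also have "\<dots> = \<rho> k / 4" unfolding \<rho>_def by simp
    finally have r4: "4 * \<rho> j \<le> \<rho> k" unfolding \<rho>_def by simp
    have "cmod (c j - c k) \<ge> cmod (x - c k) - cmod (x - c j)"
      using norm_triangle_ineq[of "x - c j" "c j - c k"] by simp
    hence "cmod (c j - x) < cmod (c j - c k)" using c[OF jN] c[OF kN] r4 \<rho>pos[of j]
      by (simp add: norm_minus_commute)
    hence "cmod (f (c j) - f x) \<le> H * cmod (f (c j) - f (c k))"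
      using sw c[OF jN] c[OF kN] x unfolding swqs_def by metis
    moreover have "F / (2*H) < cmod (f (c j) - f x)" using lo[OF jN] by (simp add: norm_minus_commute)
    ultimately have "F / (2*H) < H * cmod (f (c j) - f (c k))" by linarith
    thus "\<delta> < cmod (f (c j) - f (c k))" unfolding \<delta>_def using H
      by (simp add: field_simps power2_eq_square)
  qed
  define E where "E = (\<lambda>k. f (c k)) ` {..<N}"
  have inj: "inj_on (\<lambda>k. f (c k)) {..<N}"
  proof (rule inj_onI)
    fix j k assume "j \<in> {..<N}" "k \<in> {..<N}" "f (c j) = f (c k)"
    thus "j = k" using sep[of j k] sep[of k j] \<delta>pos by (metis linorder_neqE_nat lessThan_iff norm_zero right_minus_eq less_asym)
  qed
  have cardE: "card E = N" unfolding E_def using card_image[OF inj] by simp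
  have Esub: "E \<subseteq> cball (f x) (H * F)" unfolding E_def using up by (auto simp: dist_norm)
  have Esep: "\<forall>z\<in>E. \<forall>w\<in>E. z \<noteq> w \<longrightarrow> \<delta> < cmod (z - w)"
  proof (intro ballI impI)
    fix z w assume "z \<in> E" "w \<in> E" "z \<noteq> w"
    then obtain j k where jk: "j < N" "k < N" "z = f (c j)" "w = f (c k)" unfolding E_def by auto
    hence "j \<noteq> k" using \<open>z \<noteq> w\<close> by auto
    hence "k < j \<or> j < k" by linarith
    hence "\<delta> < cmod (f (c j) - f (c k)) \<or> \<delta> < cmod (f (c k) - f (c j))" using sep jk by blast
    thus "\<delta> < cmod (z - w)" using jk by (metis norm_minus_commute)
  qed
  have "2 * (H * F) / \<delta> = 4 * H^3" unfolding \<delta>_def using Fpos H by (simp add: field_simps power3_eq_cube power2_eq_square)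
  hence "N \<le> (2 * nat \<lceil>4 * H^3\<rceil> + 1)^2"
    using packing[OF _ Esub \<delta>pos Esep] cardE E_def by simp
  thus False unfolding N_def Nd_def by simp
qed




lemma small_iter:
  assumes sw: "swqs X f H" and H: "H \<ge> 1" and iv: "ivp X"
  shows "\<forall>x\<in>X. \<forall>a\<in>X. \<forall>b\<in>X. (4^(Nd H))^k * cmod (x - a) < cmod (x - b) \<longrightarrow>
      cmod (f x - f a) \<le> H / 2^k * cmod (f x - f b)"
proof (induction k)
  case 0
  then show ?case using sw unfolding swqs_def by simp
next
  case (Suc k)
  show ?case
  proof (intro ballI impI)
    fix x a b assume x: "x \<in> X" and a: "a \<in> X" and b: "b \<in> X"
      and lt: "(4^(Nd H))^Suc k * cmod (x - a) < cmod (x - b)"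
    define D :: real where "D = 4^(Nd H)"
    have D1: "D \<ge> 1" unfolding D_def by simp
    have Dk: "D^k \<ge> 1" using D1 by simp
    show "cmod (f x - f a) \<le> H / 2^Suc k * cmod (f x - f b)"
    proof (cases "a = x")
      case True
      then show ?thesis using H by simp
    next
      case False
      have lt': "D^k * (D * cmod (x - a)) < cmod (x - b)" using lt unfolding D_def
        by (simp add: mult.assoc mult.commute mult.left_commute)
      hence l1: "D * cmod (x - a) < cmod (x - b) / D^k" using Dk by (simp add: pos_less_divide_eq mult.commute)
      define \<rho> where "\<rho> = (D * cmod (x - a) + cmod (x - b) / D^k) / 2"
      have r1: "D * cmod (x - a) < \<rho>" "\<rho> < cmod (x - b) / D^k" using l1 \<rho>_def by simp_all
      have "cmod (x - b) / D^k \<le> cmod (x - b)" using Dk by (simp add: divide_le_eq mult_le_cancel_left1)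
      hence r2: "0 \<le> \<rho> \<and> \<rho> \<le> cmod (x - b)" using r1 D1
        by (smt (verit) norm_ge_zero mult_nonneg_nonneg)
      obtain c where c: "c \<in> X" "cmod (x - c) = \<rho>" using iv x b r2 unfolding ivp_def by blast
      have "D^k * \<rho> < cmod (x - b)" using r1(2) Dk by (simp add: pos_less_divide_eq mult.commute)
      hence "cmod (f x - f c) \<le> H / 2^k * cmod (f x - f b)" using Suc.IH x c b unfolding D_def by auto
      moreover have "cmod (f x - f a) \<le> 1/2 * cmod (f x - f c)"
        using decay[OF sw H iv x a c(1)] r1(1) c(2) unfolding D_def by simp
      ultimately show ?thesis by simp
    qed
  qed
qed

definition Md :: "real \<Rightarrow> nat" where
  "Md L = 2 * (2 * nat \<lceil>24 * L\<rceil> + 1)^2 + 1"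

lemma doubling:
  assumes sw: "swqs X f H" and H: "H \<ge> 1" and Lpos: "L > 0"
    and bt: "\<forall>z1\<in>X. \<forall>z2\<in>X. \<exists>g. path g \<and> pathstart g = z1 \<and>
      pathfinish g = z2 \<and> path_image g \<subseteq> X \<and> diameter (path_image g) \<le> L * cmod (z1 - z2)"
    and x: "x \<in> X" and a: "a \<in> X" and b: "b \<in> X"
    and lt: "cmod (x - a) < 2 * cmod (x - b)"
  shows "cmod (f x - f a) \<le> (1 + H)^(Md L) * cmod (f x - f b)"
proof -
  define d where "d = cmod (x - b)"
  define F where "F = cmod (f x - f b)"
  define M where "M = 1 + H"
  have dpos: "d > 0" using lt d_def by (smt (verit) norm_ge_zero)
  obtain g where g: "path g" "pathstart g = b" "pathfinish g = a" "path_image g \<subseteq> X"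
      "diameter (path_image g) \<le> L * cmod (b - a)"
    using bt a b by blast
  have ba: "cmod (b - a) < 3 * d"
    using norm_triangle_ineq[of "b - x" "x - a"] lt d_def by (simp add: norm_minus_commute)
  have sub: "path_image g \<subseteq> cball b (L * (3 * d))"
  proof
    fix p assume p: "p \<in> path_image g"
    have "b \<in> path_image g" using g(2) by (metis pathstart_in_path_image)
    hence "dist b p \<le> diameter (path_image g)"
      using diameter_bounded_bound[OF bounded_path_image[OF g(1)] _ p] by blast
    also have "\<dots> \<le> L * (3 * d)" using g(5) ba Lpos by (smt (verit) mult_left_mono)
    finally show "p \<in> cball b (L * (3 * d))" by simp
  qed
  have d4: "d / 4 > 0" using dpos by simp
  obtain ps where ps: "chainp b a (path_image g) (d/4) ps"
      "length ps \<le> 2 * (2 * nat \<lceil>2 * (L * (3 * d)) / (d/4)\<rceil> + 1)^2 + 1"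
    using chain_lemma[OF g(1) sub d4] g(2,3) by blast
  have "2 * (L * (3 * d)) / (d/4) = 24 * L" using dpos by (simp add: field_simps)
  hence lenps: "length ps \<le> Md L" using ps(2) unfolding Md_def by simp
  have ne: "ps \<noteq> []" and hd: "hd ps = b" and la: "last ps = a" and st: "set ps \<subseteq> path_image g"
    and stp: "\<And>k. Suc k < length ps \<Longrightarrow> cmod (ps!k - ps!Suc k) \<le> d/4"
    using ps(1) unfolding chainp_def by auto
  have inX: "\<And>i. i < length ps \<Longrightarrow> ps!i \<in> X" using st g(4) nth_mem by blast
  have M1: "M \<ge> 1" "M \<ge> H" using H M_def by simp_all
  have claim: "\<And>i. i < length ps \<Longrightarrow> cmod (f x - f (ps!i)) \<le> M^i * F"
  proof -
    fix i show "i < length ps \<Longrightarrow> cmod (f x - f (ps!i)) \<le> M^i * F"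
    proof (induction i)
      case 0
      then show ?case using hd ne F_def by (simp add: hd_conv_nth)
    next
      case (Suc i)
      have i: "i < length ps" using Suc.prems by simp
      have IH: "cmod (f x - f (ps!i)) \<le> M^i * F" using Suc.IH i by simp
      have step: "cmod (ps!i - ps!Suc i) \<le> d/4" using stp Suc.prems by simp
      have pi: "ps!i \<in> X" and pi1: "ps!Suc i \<in> X" using inX i Suc.prems by auto
      have Mi: "M^i \<ge> 1" using M1 by simp
      show ?case
      proof (cases "cmod (x - ps!i) < d/2")
        case True
        have "cmod (x - ps!Suc i) \<le> cmod (x - ps!i) + cmod (ps!i - ps!Suc i)"
          using norm_triangle_ineq[of "x - ps!i" "ps!i - ps!Suc i"] by simp
        hence "cmod (x - ps!Suc i) < cmod (x - b)" using True step d_def dpos by linarith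
        hence "cmod (f x - f (ps!Suc i)) \<le> H * F" using sw x pi1 b unfolding swqs_def F_def by blast
        also have "\<dots> \<le> M^Suc i * F"
        proof -
          have "M^Suc i = M * M^i" by simp
          also have "\<dots> \<ge> M" using Mi M1 by (simp add: mult_le_cancel_left1)
          finally have "H \<le> M^Suc i" using M1 by linarith
          thus ?thesis using F_def by (simp add: mult_right_mono)
        qed
        finally show ?thesis .
      next
        case False
        hence "cmod (ps!i - ps!Suc i) < cmod (ps!i - x)" using step dpos by (simp add: norm_minus_commute)
        hence "cmod (f (ps!i) - f (ps!Suc i)) \<le> H * cmod (f (ps!i) - f x)"
          using sw x pi pi1 unfolding swqs_def by blast
        moreover have "cmod (f x - f (ps!Suc i)) \<le> cmod (f x - f (ps!i)) + cmod (f (ps!i) - f (ps!Suc i))"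
          using norm_triangle_ineq[of "f x - f (ps!i)" "f (ps!i) - f (ps!Suc i)"] by simp
        ultimately have "cmod (f x - f (ps!Suc i)) \<le> (1 + H) * cmod (f x - f (ps!i))"
          by (simp add: norm_minus_commute algebra_simps)
        also have "\<dots> \<le> M * (M^i * F)" using IH M_def H by (simp add: mult_left_mono)
        finally show ?thesis by (simp add: mult.assoc)
      qed
    qed
  qed
  have "a = ps!(length ps - 1)" using la ne by (simp add: last_conv_nth)
  hence "cmod (f x - f a) \<le> M^(length ps - 1) * F" using claim ne by simp
  also have "\<dots> \<le> M^(Md L) * F"
    using M1 lenps F_def by (intro mult_right_mono power_increasing) simp_all
  finally show ?thesis unfolding M_def F_def .
qed

lemma large_iter:
  assumes sw: "swqs X f H" and H: "H \<ge> 1" and Lpos: "L > 0"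
    and bt: "\<forall>z1\<in>X. \<forall>z2\<in>X. \<exists>g. path g \<and> pathstart g = z1 \<and>
      pathfinish g = z2 \<and> path_image g \<subseteq> X \<and> diameter (path_image g) \<le> L * cmod (z1 - z2)"
    and iv: "ivp X"
  shows "\<forall>x\<in>X. \<forall>a\<in>X. \<forall>b\<in>X. cmod (x - a) < 2^k * cmod (x - b) \<longrightarrow>
      cmod (f x - f a) \<le> ((1 + H)^(Md L))^k * H * cmod (f x - f b)"
proof (induction k)
  case 0
  then show ?case using sw unfolding swqs_def by simp
next
  case (Suc k)
  define K where "K = (1 + H)^(Md L)"
  have K1: "K \<ge> 1" unfolding K_def using H by simp
  show ?case
  proof (intro ballI impI)
    fix x a b assume x: "x \<in> X" and a: "a \<in> X" and b: "b \<in> X"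
      and lt: "cmod (x - a) < 2^Suc k * cmod (x - b)"
    show "cmod (f x - f a) \<le> ((1 + H)^(Md L))^Suc k * H * cmod (f x - f b)"
    proof (cases "a = x")
      case True
      then show ?thesis using H by simp
    next
      case False
      hence ap: "cmod (x - a) > 0" by simp
      have h: "cmod (x - a)/2 < 2^k * cmod (x - b)" using lt by simp
      define m where "m = min (cmod (x - a)) (2^k * cmod (x - b))"
      have m: "m \<le> cmod (x - a)" "m \<le> 2^k * cmod (x - b)" "cmod (x - a)/2 < m"
        using h ap unfolding m_def by auto
      define \<rho> where "\<rho> = cmod (x - a)/4 + m/2"
      have r\<rho>: "\<rho> = cmod (x - a)/4 + m/2" unfolding \<rho>_def ..
      have r1: "cmod (x - a)/2 < \<rho>" using m ap r\<rho> by linarith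
      have r2: "\<rho> < 2^k * cmod (x - b)" using m ap r\<rho> h by linarith
      have r3: "0 \<le> \<rho>" using m ap r\<rho> by linarith
      have r4: "\<rho> \<le> cmod (x - a)" using m ap r\<rho> by linarith
      note r = r1 r2 r3 r4
      obtain c where c: "c \<in> X" "cmod (x - c) = \<rho>" using iv x a r unfolding ivp_def by blast
      have "cmod (f x - f c) \<le> K^k * H * cmod (f x - f b)" using Suc.IH x c b r unfolding K_def by auto
      moreover have "cmod (f x - f a) \<le> K * cmod (f x - f c)"
        using doubling[OF sw H Lpos bt x a c(1)] r(1) c(2) unfolding K_def by simp
      ultimately have "cmod (f x - f a) \<le> K * (K^k * H * cmod (f x - f b))"
        using K1 by (smt (verit) mult_left_mono)
      thus ?thesis unfolding K_def by (simp add: mult.assoc)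
    qed
  qed
qed




lemma root_ge_self: "0 \<le> t \<Longrightarrow> t \<le> 1 \<Longrightarrow> m \<ge> 1 \<Longrightarrow> t \<le> root m t"
  using real_root_increasing[of 1 m t] by simp

lemma root_le_self: "1 \<le> t \<Longrightarrow> m \<ge> 1 \<Longrightarrow> root m t \<le> t"
  using real_root_decreasing[of 1 m t] by simp

lemma phi_small: "0 \<le> t \<Longrightarrow> t \<le> 1 \<Longrightarrow> m \<ge> 1 \<Longrightarrow> j \<ge> 1 \<Longrightarrow> max (root m t) (t^j) = root m t"
proof -
  assume a: "0 \<le> t" "t \<le> 1" "m \<ge> 1" "j \<ge> 1"
  have "t^j \<le> t^1" using a by (intro power_decreasing) simp_all
  thus ?thesis using root_ge_self[OF a(1,2,3)] by simp
qed

lemma phi_large: "1 \<le> t \<Longrightarrow> m \<ge> 1 \<Longrightarrow> j \<ge> 1 \<Longrightarrow> max (root m t) (t^j) = t^j"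
proof -
  assume a: "1 \<le> t" "m \<ge> 1" "j \<ge> 1"
  have "t^1 \<le> t^j" using a by (intro power_increasing) simp_all
  thus ?thesis using root_le_self[OF a(1,2)] by simp
qed

lemma psi_small: "0 \<le> v \<Longrightarrow> v \<le> 1 \<Longrightarrow> m \<ge> 1 \<Longrightarrow> j \<ge> 1 \<Longrightarrow> min (v^m) (root j v) = v^m"
proof -
  assume a: "0 \<le> v" "v \<le> 1" "m \<ge> 1" "j \<ge> 1"
  have "v^m \<le> v^1" using a by (intro power_decreasing) simp_all
  thus ?thesis using root_ge_self[OF a(1,2,4)] by simp
qed

lemma psi_large: "1 \<le> v \<Longrightarrow> m \<ge> 1 \<Longrightarrow> j \<ge> 1 \<Longrightarrow> min (v^m) (root j v) = root j v"
proof -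
  assume a: "1 \<le> v" "m \<ge> 1" "j \<ge> 1"
  have "v^1 \<le> v^m" using a by (intro power_increasing) simp_all
  thus ?thesis using root_le_self[OF a(1,3)] by simp
qed

lemma psi_phi: assumes "0 \<le> t" "m \<ge> 1" "j \<ge> 1"
  shows "min ((max (root m t) (t^j))^m) (root j (max (root m t) (t^j))) = t"
proof (cases "t \<le> 1")
  case True
  have r: "0 \<le> root m t" "root m t \<le> 1" using True assms by simp_all
  show ?thesis using phi_small[OF assms(1) True assms(2,3)] psi_small[OF r assms(2,3)] assms by simp
next
  case False
  have r: "1 \<le> t^j" using False by simp
  show ?thesis using phi_large[of t m j] psi_large[OF r assms(2,3)] assms False
    by (simp add: real_root_power_cancel)
qed

lemma phi_psi: assumes "0 \<le> v" "m \<ge> 1" "j \<ge> 1"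
  shows "max (root m (min (v^m) (root j v))) ((min (v^m) (root j v))^j) = v"
proof (cases "v \<le> 1")
  case True
  have r: "0 \<le> v^m" "v^m \<le> 1" using True assms by (simp_all add: power_le_one)
  show ?thesis using psi_small[OF assms(1) True assms(2,3)] phi_small[OF r assms(2,3)] assms
    by (simp add: real_root_power_cancel)
next
  case False
  have r: "1 \<le> root j v" using False assms by simp
  show ?thesis using psi_large[of v m j] phi_large[OF r assms(2,3)] assms False by simp
qed

lemma eta_homeo:
  assumes A: "A > 0" and m: "m \<ge> 1" and j: "j \<ge> 1"
  shows "homeomorphism {0::real..} {0..} (\<lambda>t. A * max (root m t) (t^j)) (\<lambda>u. min ((u/A)^m) (root j (u/A)))"
proof (rule homeomorphismI)
  show "continuous_on {0..} (\<lambda>t. A * max (root m t) (t^j))" by (intro continuous_intros)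
  show "continuous_on {0..} (\<lambda>u. min ((u/A)^m) (root j (u/A)))" using A by (intro continuous_intros) auto
  show "(\<lambda>t. A * max (root m t) (t^j)) ` {0..} \<subseteq> {0..}" using A by (auto intro!: mult_nonneg_nonneg max.coboundedI1 real_root_ge_zero)
  show "(\<lambda>u. min ((u/A)^m) (root j (u/A))) ` {0..} \<subseteq> {0..}" using A by (auto intro!: real_root_ge_zero)
  show "\<And>x. x \<in> {0..} \<Longrightarrow> min ((A * max (root m x) (x^j) / A)^m) (root j (A * max (root m x) (x^j) / A)) = x"
    using psi_phi m j A by simp
  show "\<And>y. y \<in> {0..} \<Longrightarrow> A * max (root m (min ((y/A)^m) (root j (y/A)))) ((min ((y/A)^m) (root j (y/A)))^j) = y"
    using phi_psi[of "y/A" m j for y] m j A by simp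
qed




lemma qs_roundish:
  assumes qs: "quasisymmetric X Y f"
  shows "\<exists>C. \<forall>x\<in>X. \<forall>r>0. roundish C Y (f ` cballX X x r) (f x)"
proof -
  obtain g where hom: "homeomorphism X Y f g" using qs unfolding quasisymmetric_def by blast
  obtain \<eta> \<eta>' where eta: "\<forall>t>0. \<forall>a\<in>X. \<forall>b\<in>X. \<forall>x\<in>X. cmod (x - a) \<le> t * cmod (x - b) \<longrightarrow>
            cmod (f x - f a) \<le> \<eta> t * cmod (f x - f b)"
    using qs unfolding quasisymmetric_def by blast
  define C where "C = 2 * \<bar>\<eta> 1\<bar> + 1"
  have Cpos: "C > 0" unfolding C_def by simp
  have gX: "\<And>w. w \<in> Y \<Longrightarrow> g w \<in> X \<and> f (g w) = w" using hom unfolding homeomorphism_def by auto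
  have fY: "\<And>z. z \<in> X \<Longrightarrow> f z \<in> Y" using hom unfolding homeomorphism_def by auto
  show ?thesis
  proof (intro exI ballI allI impI)
    fix x r assume x: "x \<in> X" and r: "(r::real) > 0"
    define S where "S = f ` cballX X x r"
    have fxS: "f x \<in> S" unfolding S_def cballX_def using x r by auto
    have key: "\<And>w p. w \<in> Y - S \<Longrightarrow> p \<in> S \<Longrightarrow> cmod (f x - p) \<le> \<bar>\<eta> 1\<bar> * cmod (f x - w)"
    proof -
      fix w p assume w: "w \<in> Y - S" and p: "p \<in> S"
      obtain b where b: "b \<in> X" "cmod (b - x) \<le> r" "p = f b" using p unfolding S_def cballX_def by auto
      have a: "g w \<in> X" "f (g w) = w" using gX w by auto
      have "\<not> cmod (g w - x) \<le> r" using a w unfolding S_def cballX_def by force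
      hence "cmod (x - b) \<le> 1 * cmod (x - g w)" using b by (simp add: norm_minus_commute)
      hence "cmod (f x - f b) \<le> \<eta> 1 * cmod (f x - f (g w))"
        using eta[rule_format, OF zero_less_one b(1) a(1) x] by blast
      also have "\<dots> \<le> \<bar>\<eta> 1\<bar> * cmod (f x - f (g w))" by (simp add: mult_right_mono)
      finally show "cmod (f x - p) \<le> \<bar>\<eta> 1\<bar> * cmod (f x - w)" using a b by simp
    qed
    show "roundish C Y (f ` cballX X x r) (f x)"
      unfolding roundish_def ediam_def inr_def S_def[symmetric]
    proof (cases "Y - S = {}")
      case True
      then show "(SUP p\<in>S \<times> S. ereal (cmod (fst p - snd p))) \<le> ereal C * (INF w\<in>Y - S. ereal (cmod (f x - w)))"
      proof -
        have "(INF w\<in>Y - S. ereal (cmod (f x - w))) = \<infinity>" unfolding True by (simp add: top_ereal_def)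
        thus ?thesis using Cpos by simp
      qed
    next
      case False
      then obtain w0 where w0: "w0 \<in> Y - S" by blast
      define \<Delta> where "\<Delta> = (SUP p\<in>S \<times> S. ereal (cmod (fst p - snd p)))"
      have up: "\<And>w. w \<in> Y - S \<Longrightarrow> \<Delta> \<le> ereal (C * cmod (f x - w))"
        unfolding \<Delta>_def
      proof (rule SUP_least)
        fix w p assume w: "w \<in> Y - S" and p: "p \<in> S \<times> S"
        have "cmod (fst p - snd p) \<le> cmod (f x - fst p) + cmod (f x - snd p)"
          using norm_triangle_ineq[of "fst p - f x" "f x - snd p"] by (simp add: norm_minus_commute)
        also have "\<dots> \<le> 2 * \<bar>\<eta> 1\<bar> * cmod (f x - w)" 
        proof -
          have "fst p \<in> S" "snd p \<in> S" using p by (auto simp: mem_Times_iff)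
          hence "cmod (f x - fst p) \<le> \<bar>\<eta> 1\<bar> * cmod (f x - w)" "cmod (f x - snd p) \<le> \<bar>\<eta> 1\<bar> * cmod (f x - w)"
            using key[OF w] by auto
          thus ?thesis by linarith
        qed
        also have "\<dots> \<le> C * cmod (f x - w)" unfolding C_def by (simp add: mult_right_mono)
        finally show "ereal (cmod (fst p - snd p)) \<le> ereal (C * cmod (f x - w))" by simp
      qed
      have lo: "ereal 0 \<le> \<Delta>" unfolding \<Delta>_def
        using fxS by (intro SUP_upper2[of "(f x, f x)"]) auto
      obtain d where d: "\<Delta> = ereal d" "0 \<le> d" using up[OF w0] lo by (cases \<Delta>) auto
      have "ereal (d / C) \<le> (INF w\<in>Y - S. ereal (cmod (f x - w)))"
      proof (rule INF_greatest)
        fix w assume "w \<in> Y - S"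
        hence "d \<le> C * cmod (f x - w)" using up d by simp
        thus "ereal (d / C) \<le> ereal (cmod (f x - w))" using Cpos by (simp add: divide_le_eq mult.commute)
      qed
      hence "ereal C * ereal (d / C) \<le> ereal C * (INF w\<in>Y - S. ereal (cmod (f x - w)))"
      proof -
        have "ereal (d / C) * ereal C \<le> (INF w\<in>Y - S. ereal (cmod (f x - w))) * ereal C"
          using \<open>ereal (d / C) \<le> _\<close> Cpos by (intro ereal_mult_right_mono) simp_all
        thus ?thesis by (metis mult.commute)
      qed
      moreover have "ereal C * ereal (d / C) = \<Delta>" using d Cpos by simp
      ultimately show "(SUP p\<in>S \<times> S. ereal (cmod (fst p - snd p))) \<le> ereal C * (INF w\<in>Y - S. ereal (cmod (f x - w)))"
        unfolding \<Delta>_def by simp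
    qed
  qed
qed

lemma roundish_swqs:
  assumes hom: "homeomorphism X Y f g"
    and rd: "\<forall>x\<in>X. \<forall>r>0. roundish C Y (f ` cballX X x r) (f x)"
  shows "swqs X f (\<bar>C\<bar> + 1)"
  unfolding swqs_def
proof (intro ballI impI)
  fix x a b assume x: "x \<in> X" and a: "a \<in> X" and b: "b \<in> X" and lt: "cmod (x - a) < cmod (x - b)"
  show "cmod (f x - f a) \<le> (\<bar>C\<bar> + 1) * cmod (f x - f b)"
  proof (cases "a = x")
    case True thus ?thesis by simp
  next
    case False
    define r where "r = cmod (x - a)"
    have r: "r > 0" using False r_def by simp
    define S where "S = f ` cballX X x r"
    have inj: "\<And>u v. u \<in> X \<Longrightarrow> v \<in> X \<Longrightarrow> f u = f v \<Longrightarrow> u = v"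
      using hom unfolding homeomorphism_def by metis
    have fxS: "f x \<in> S" "f a \<in> S" unfolding S_def cballX_def r_def using x a
      by (auto simp: norm_minus_commute)
    have fbY: "f b \<in> Y - S"
    proof
      show "f b \<in> Y" using hom b unfolding homeomorphism_def by auto
      show "f b \<notin> S"
      proof
        assume "f b \<in> S"
        then obtain z where z: "z \<in> X" "cmod (z - x) \<le> r" "f b = f z" unfolding S_def cballX_def by auto
        hence "z = b" using inj b by metis
        thus False using z lt r_def by (simp add: norm_minus_commute)
      qed
    qed
    have rnd: "ediam S \<le> ereal C * inr Y S (f x)" using rd x r unfolding roundish_def S_def by blast
    have e1: "ereal (cmod (f x - f a)) \<le> ediam S" unfolding ediam_def
      using fxS by (intro SUP_upper2[of "(f x, f a)"]) auto
    have e2: "inr Y S (f x) \<le> ereal (cmod (f x - f b))" unfolding inr_def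
      using fbY by (intro INF_lower2[of "f b"]) auto
    have e3: "ereal 0 \<le> inr Y S (f x)" unfolding inr_def by (intro INF_greatest) simp
    obtain i where i: "inr Y S (f x) = ereal i" "0 \<le> i" "i \<le> cmod (f x - f b)"
      using e2 e3 by (cases "inr Y S (f x)") auto
    have "cmod (f x - f a) \<le> C * i" using e1 rnd i(1) by (metis order_trans times_ereal.simps(1) ereal_less_eq(3))
    also have "\<dots> \<le> \<bar>C\<bar> * i" using i by (simp add: mult_right_mono)
    also have "\<dots> \<le> (\<bar>C\<bar> + 1) * cmod (f x - f b)" using i by (intro mult_mono) simp_all
    finally show ?thesis .
  qed
qed




lemma small_case:
  assumes sw: "swqs X f H" and H: "H \<ge> 1" and iv: "ivp X"
    and x: "x \<in> X" and a: "a \<in> X" and b: "b \<in> X"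
    and s: "0 < s" "s \<le> 1" and lt: "cmod (x - a) < s * cmod (x - b)"
  shows "cmod (f x - f a) \<le> 2 * H * root (2 * Nd H) s * cmod (f x - f b)"
proof -
  define N where "N = Nd H"
  define m where "m = 2 * N"
  define D :: real where "D = 4^N"
  have N1: "N \<ge> 1" unfolding N_def Nd_def by simp
  have D1: "D > 1" unfolding D_def using N1 by (simp add: one_less_power)
  have D2: "D = 2^m" unfolding D_def m_def by (simp add: power_mult)
  define P where "P k = (1 < D^k * s)" for k
  have "\<not> P 0" unfolding P_def using s by simp
  moreover have "\<exists>n. P n"
  proof -
    obtain n where "1/s < D^n" using real_arch_pow[OF D1] by blast
    hence "1 < D^n * s" using s by (simp add: divide_less_eq)
    thus ?thesis unfolding P_def by blast
  qed
  ultimately obtain k where k: "\<not> P k" "P (Suc k)" using exists_least_lemma[of P] by blast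
  have Dk: "D^k * s \<le> 1" "1 < D^Suc k * s" using k unfolding P_def by auto
  have "0 < s * cmod (x - b)" using lt by (meson le_less_trans norm_ge_zero)
  hence bpos: "cmod (x - b) > 0" using s by (simp add: zero_less_mult_iff)
  have "D^k * cmod (x - a) < D^k * (s * cmod (x - b))" using lt D1 by simp
  also have "\<dots> = (D^k * s) * cmod (x - b)" by simp
  also have "\<dots> \<le> cmod (x - b)" using Dk(1) bpos by (simp add: mult_le_cancel_right1)
  finally have "D^k * cmod (x - a) < cmod (x - b)" .
  hence i1: "cmod (f x - f a) \<le> H / 2^k * cmod (f x - f b)"
    using small_iter[OF sw H iv, of k] x a b unfolding D_def N_def by blast
  define r where "r = root m s"
  have m0: "m > 0" unfolding m_def using N1 by simp
  have r0: "r \<ge> 0" unfolding r_def using s by (simp add: real_root_ge_zero)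
  have rm: "r^m = s" unfolding r_def using s m0 by simp
  have "D^Suc k = (2^Suc k)^m" unfolding D2 by (simp add: power_mult[symmetric] mult.commute)
  hence "1 < (2^Suc k)^m * r^m" using Dk(2) rm by simp
  hence "1 < (2^Suc k * r)^m" by (simp add: power_mult_distrib)
  hence "1 < 2^Suc k * r"
  proof -
    assume h: "1 < (2^Suc k * r)^m"
    show ?thesis
    proof (rule ccontr)
      assume "\<not> 1 < 2^Suc k * r"
      hence "(2^Suc k * r)^m \<le> 1" using r0 by (intro power_le_one) simp_all
      thus False using h by simp
    qed
  qed
  hence "1 < 2 * 2^k * r" by simp
  hence "1 / 2^k < 2 * r" by (simp add: divide_less_eq mult.commute mult.left_commute)
  hence "H * (1 / 2^k) \<le> H * (2 * r)" using H by (intro mult_left_mono) simp_all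
  hence "H / 2^k \<le> 2 * H * r" by simp
  hence "H / 2^k * cmod (f x - f b) \<le> 2 * H * r * cmod (f x - f b)" by (rule mult_right_mono) simp
  thus ?thesis using i1 unfolding r_def m_def N_def by linarith
qed

lemma large_case:
  assumes sw: "swqs X f H" and H: "H \<ge> 1" and Lpos: "L > 0"
    and bt: "\<forall>z1\<in>X. \<forall>z2\<in>X. \<exists>g. path g \<and> pathstart g = z1 \<and>
      pathfinish g = z2 \<and> path_image g \<subseteq> X \<and> diameter (path_image g) \<le> L * cmod (z1 - z2)"
    and iv: "ivp X"
    and x: "x \<in> X" and a: "a \<in> X" and b: "b \<in> X"
    and s: "1 < s" and lt: "cmod (x - a) < s * cmod (x - b)"
    and jb: "(1 + H)^(Md L) \<le> 2^j"
  shows "cmod (f x - f a) \<le> H * 2^j * s^j * cmod (f x - f b)"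
proof -
  define P where "P k = (s \<le> 2^k)" for k
  have "\<not> P 0" unfolding P_def using s by simp
  moreover have "\<exists>n. P n"
  proof -
    obtain n where "s < 2^n" using real_arch_pow[of 2 s] by auto
    thus ?thesis unfolding P_def by (blast intro: less_imp_le)
  qed
  ultimately obtain k where k: "\<not> P k" "P (Suc k)" using exists_least_lemma[of P] by blast
  have kk: "2^k < s" "s \<le> 2^Suc k" using k unfolding P_def by auto
  have "cmod (x - a) < 2^Suc k * cmod (x - b)"
  proof -
    have "s * cmod (x - b) \<le> 2^Suc k * cmod (x - b)" using kk(2) by (intro mult_right_mono) simp_all
    thus ?thesis using lt by linarith
  qed
  hence i1: "cmod (f x - f a) \<le> ((1 + H)^(Md L))^Suc k * H * cmod (f x - f b)"
    using large_iter[OF sw H Lpos bt iv, of "Suc k"] x a b by blast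
  have K0: "0 \<le> (1 + H)^(Md L)" using H by simp
  have "((1 + H)^(Md L))^Suc k \<le> (2^j)^Suc k" using jb K0 by (intro power_mono) simp_all
  also have "\<dots> = 2^j * (2^k)^j" by (simp add: power_mult[symmetric] mult.commute)
  also have "\<dots> \<le> 2^j * s^j" using kk(1) by (intro mult_left_mono power_mono) simp_all
  finally have "((1 + H)^(Md L))^Suc k * (H * cmod (f x - f b)) \<le> 2^j * s^j * (H * cmod (f x - f b))"
    using H by (intro mult_right_mono) simp_all
  thus ?thesis using i1 by (simp add: mult_ac)
qed




lemma swqs_qs:
  assumes hom: "homeomorphism X Y f g" and bt0: "bounded_turning X" and sw: "swqs X f H" and H: "H \<ge> 1"
  shows "quasisymmetric X Y f"
proof -
  obtain L where Lpos: "L > 0" and bt: "\<forall>z1\<in>X. \<forall>z2\<in>X. \<exists>g. path g \<and> pathstart g = z1 \<and>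
      pathfinish g = z2 \<and> path_image g \<subseteq> X \<and> diameter (path_image g) \<le> L * cmod (z1 - z2)"
    using bt0 unfolding bounded_turning_def by blast
  have iv: "ivp X" using bt_ivp[OF bt0] .
  define m where "m = 2 * Nd H"
  define n where "n = nat \<lceil>H\<rceil>"
  define j where "j = Md L * n"
  define A :: real where "A = 4 * H * 4^j"
  have m1: "m \<ge> 1" unfolding m_def Nd_def by simp
  have n1: "n \<ge> 1" using H unfolding n_def by linarith
  have j1: "j \<ge> 1" unfolding j_def Md_def using n1 by simp
  have Apos: "A > 0" using H unfolding A_def by simp
  have jb: "(1 + H)^(Md L) \<le> 2^j"
  proof -
    have "H \<le> real n" unfolding n_def by (simp add: real_nat_ceiling_ge)
    moreover have "Suc n \<le> 2^n" by (induction n) auto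
    hence "real (Suc n) \<le> 2^n" by (metis of_nat_le_iff of_nat_numeral of_nat_power)
    ultimately have "1 + H \<le> 2^n" by simp
    hence "(1 + H)^(Md L) \<le> (2^n)^(Md L)" using H by (intro power_mono) simp_all
    also have "\<dots> = 2^j" unfolding j_def by (simp add: power_mult[symmetric] mult.commute)
    finally show ?thesis .
  qed
  define \<eta> where "\<eta> t = A * max (root m t) (t^j)" for t :: real
  define \<eta>' where "\<eta>' u = min ((u/A)^m) (root j (u/A))" for u :: real
  have homeo: "homeomorphism {0::real..} {0..} \<eta> \<eta>'"
    unfolding \<eta>_def[abs_def] \<eta>'_def[abs_def] using eta_homeo[OF Apos m1 j1] .
  have bound: "\<forall>t>0. \<forall>a\<in>X. \<forall>b\<in>X. \<forall>x\<in>X. cmod (x - a) \<le> t * cmod (x - b) \<longrightarrow>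
            cmod (f x - f a) \<le> \<eta> t * cmod (f x - f b)"
  proof (intro allI impI ballI)
    fix t a b x assume t: "(t::real) > 0" and a: "a \<in> X" and b: "b \<in> X" and x: "x \<in> X"
      and le: "cmod (x - a) \<le> t * cmod (x - b)"
    have F0: "0 \<le> cmod (f x - f b)" by simp
    have rt0: "0 \<le> root m t" using t by (simp add: real_root_ge_zero)
    have mx: "root m t \<le> max (root m t) (t^j)" "t^j \<le> max (root m t) (t^j)" by simp_all
    have A4: "4 * H \<le> A" unfolding A_def using H by simp
    show "cmod (f x - f a) \<le> \<eta> t * cmod (f x - f b)"
    proof (cases "b = x")
      case True
      hence "a = x" using le by simp
      thus ?thesis using True by simp
    next
      case False
      hence bpos: "cmod (x - b) > 0" by simp
      define s where "s = 2 * t"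
      have "t * cmod (x - b) < 2 * t * cmod (x - b)" using bpos t by simp
      hence lt: "cmod (x - a) < s * cmod (x - b)" using le unfolding s_def by linarith
      show ?thesis
      proof (cases "s \<le> 1")
        case True
        have s0: "0 < s" using t s_def by simp
        have i1: "cmod (f x - f a) \<le> 2 * H * root m s * cmod (f x - f b)"
          using small_case[OF sw H iv x a b s0 True lt] unfolding m_def .
        have "root m s = root m 2 * root m t" unfolding s_def by (simp add: real_root_mult)
        also have "\<dots> \<le> 2 * root m t" using root_le_self[of 2 m] m1 rt0 by (intro mult_right_mono) simp_all
        finally have "2 * H * root m s \<le> 2 * H * (2 * root m t)" using H by (intro mult_left_mono) simp_all
        also have "\<dots> = (4 * H) * root m t" by simp
        also have "\<dots> \<le> A * max (root m t) (t^j)" using A4 mx rt0 H by (intro mult_mono) simp_all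
        finally have "2 * H * root m s * cmod (f x - f b) \<le> \<eta> t * cmod (f x - f b)"
          unfolding \<eta>_def by (rule mult_right_mono) simp
        thus ?thesis using i1 by linarith
      next
        case False
        hence s1: "1 < s" by simp
        have i1: "cmod (f x - f a) \<le> H * 2^j * s^j * cmod (f x - f b)"
          using large_case[OF sw H Lpos bt iv x a b s1 lt jb] .
        have "H * 2^j * s^j = H * 4^j * t^j" unfolding s_def
          by (simp add: power_mult_distrib power_mult[symmetric] mult.assoc[symmetric])
            (simp add: power_mult_distrib[symmetric])
        also have "\<dots> \<le> A * max (root m t) (t^j)" unfolding A_def using mx H t
          by (intro mult_mono) simp_all
        finally have "H * 2^j * s^j * cmod (f x - f b) \<le> \<eta> t * cmod (f x - f b)"
          unfolding \<eta>_def by (rule mult_right_mono) simp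
        thus ?thesis using i1 by linarith
      qed
    qed
  qed
  show ?thesis unfolding quasisymmetric_def using hom homeo bound by blast
qed



theorem lemma3p2:
  fixes X Y :: "complex set" and f :: "complex \<Rightarrow> complex"
  assumes "\<exists>g. homeomorphism X Y f g"
    and "bounded_turning X"
  shows "quasisymmetric X Y f \<longleftrightarrow>
    (\<exists>C::real. \<forall>x\<in>X. \<forall>r>0. roundish C Y (f ` cballX X x r) (f x))"
proof
  assume "quasisymmetric X Y f"
  thus "\<exists>C::real. \<forall>x\<in>X. \<forall>r>0. roundish C Y (f ` cballX X x r) (f x)" by (rule qs_roundish)
next
  assume "\<exists>C::real. \<forall>x\<in>X. \<forall>r>0. roundish C Y (f ` cballX X x r) (f x)"
  then obtain C where C: "\<forall>x\<in>X. \<forall>r>0. roundish C Y (f ` cballX X x r) (f x)" by blast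
  obtain g where hom: "homeomorphism X Y f g" using assms(1) by blast
  have "swqs X f (\<bar>C\<bar> + 1)" using roundish_swqs[OF hom C] .
  thus "quasisymmetric X Y f" using swqs_qs[OF hom assms(2)] by simp
qed

end
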